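(* Let $(\Omega,\Sigma,\mu;\phi)$ be a bimeasurable measure preserving dynamical system. Then for every $A\in\Sigma$ the minimal invariant superset $A^*$ belongs to $\Sigma_{\mathrm{inv}}$ and \[A^*=\bigcup_{m\in\mathbb{N}_0}\phi^{-m}\Bigl(\bigcup_{n\in\mathbb{N}_0}\phi^n(A)\Bigr),\qquad \mu\Bigl(A^*\,\triangle\,\bigcup_{n\in\mathbb{N}_0}\phi^n(A)\Bigr)=0.\]
   Context: A measure preserving dynamical system $(\Omega,\Sigma,\mu;\phi)$ is a probability space with a measurable map $\phi\colon\Omega\to\Omega$ such that $\mu(\phi^{-1}(A))=\mu(A)$ for all $A\in\Sigma$; it is bimeasurable if $\phi^{-1}(A),\phi(A)\in\Sigma$ for all $A\in\Sigma$. $\Sigma_{\mathrm{inv}}=\{A\in\Sigma:\phi^{-1}(A)=A\}$. For $A\subseteq\Omega$, the minimal invariant superset $A^*$ is the intersection of all sets $B\subseteq\Omega$ with $A\subseteq B$ and $\phi^{-1}(B)=B$. *)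

theory Defs
  imports "HOL-Probability.Probability"
begin

definition mpds :: "'a measure \<Rightarrow> ('a \<Rightarrow> 'a) \<Rightarrow> bool" where
  "mpds M phi \<longleftrightarrow> prob_space M \<and> phi \<in> M \<rightarrow>\<^sub>M M \<and>
     (\<forall>A\<in>sets M. emeasure M (phi -` A \<inter> space M) = emeasure M A)"

definition bimeasurable_mpds :: "'a measure \<Rightarrow> ('a \<Rightarrow> 'a) \<Rightarrow> bool" where
  "bimeasurable_mpds M phi \<longleftrightarrow> mpds M phi \<and>
     (\<forall>A\<in>sets M. phi -` A \<inter> space M \<in> sets M \<and> phi ` A \<in> sets M)"

definition inv_sets :: "'a measure \<Rightarrow> ('a \<Rightarrow> 'a) \<Rightarrow> 'a set set" where
  "inv_sets M phi = {A \<in> sets M. phi -` A \<inter> space M = A}"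

definition min_inv_superset :: "'a measure \<Rightarrow> ('a \<Rightarrow> 'a) \<Rightarrow> 'a set \<Rightarrow> 'a set" where
  "min_inv_superset M phi A =
     \<Inter>{B. B \<subseteq> space M \<and> A \<subseteq> B \<and> phi -` B \<inter> space M = B}"

end

theory Submission
  imports Defs
begin

theorem lemma3p5:
  fixes M :: "'a measure" and phi :: "'a \<Rightarrow> 'a" and A :: "'a set"
  assumes "bimeasurable_mpds M phi"
    and "A \<in> sets M"
  shows "min_inv_superset M phi A \<in> inv_sets M phi
    \<and> min_inv_superset M phi A =
        (\<Union>m::nat. (phi ^^ m) -` (\<Union>n::nat. (phi ^^ n) ` A) \<inter> space M)
    \<and> emeasure M ((min_inv_superset M phi A - (\<Union>n::nat. (phi ^^ n) ` A))
                 \<union> ((\<Union>n::nat. (phi ^^ n) ` A) - min_inv_superset M phi A)) = 0"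
proof -
  have ps: "prob_space M" and meas: "phi \<in> M \<rightarrow>\<^sub>M M"
    and pres: "\<And>B. B \<in> sets M \<Longrightarrow> emeasure M (phi -` B \<inter> space M) = emeasure M B"
    and img: "\<And>B. B \<in> sets M \<Longrightarrow> phi ` B \<in> sets M"
    using assms(1) unfolding bimeasurable_mpds_def mpds_def by auto
  interpret prob_space M by fact
  have sp: "\<And>x. x \<in> space M \<Longrightarrow> phi x \<in> space M"
    using meas by (meson measurable_space)
  have Asp: "A \<subseteq> space M" using assms(2) sets.sets_into_space by blast
  define U where "U = (\<Union>n::nat. (phi ^^ n) ` A)"
  define P where "P m = (phi ^^ m) -` U \<inter> space M" for m
  define B where "B = (\<Union>m. P m)"
  have imgn: "(phi ^^ n) ` A \<in> sets M" for n
  proof (induction n)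
    case (Suc n)
    have "(phi ^^ Suc n) ` A = phi ` ((phi ^^ n) ` A)" by (simp add: image_comp)
    then show ?case using img[OF Suc] by simp
  qed (simp add: assms(2))
  have Um: "U \<in> sets M" unfolding U_def using imgn by auto
  have Usp: "U \<subseteq> space M" using Um sets.sets_into_space by blast
  have Ufw: "phi y \<in> U" if "y \<in> U" for y
  proof -
    from that obtain n a where "a \<in> A" "y = (phi ^^ n) a" unfolding U_def by auto
    then have "phi y = (phi ^^ Suc n) a" by simp
    then show ?thesis unfolding U_def using \<open>a \<in> A\<close> by blast
  qed
  have Psuc: "P (Suc m) = phi -` P m \<inter> space M" for m
    unfolding P_def by (auto simp: funpow_swap1 sp)
  have Pm: "P m \<in> sets M" for m
    by (induction m) (auto simp: Psuc, auto simp: P_def Um Usp Int_absorb2 dest: measurable_sets[OF meas])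
  have Pmeas: "emeasure M (P m) = emeasure M U" for m
    by (induction m) (auto simp: Psuc pres Pm, simp add: P_def Int_absorb2 Usp)
  have P0: "P 0 = U" unfolding P_def using Usp by auto
  have inc: "incseq P"
  proof (rule incseq_SucI)
    fix m show "P m \<subseteq> P (Suc m)"
      unfolding P_def using Ufw by (auto simp: sp)
  qed
  have Bm: "B \<in> sets M" unfolding B_def using Pm by auto
  have Binv: "phi -` B \<inter> space M = B"
  proof
    show "phi -` B \<inter> space M \<subseteq> B"
    proof
      fix x assume "x \<in> phi -` B \<inter> space M"
      then obtain m where "x \<in> P (Suc m)" unfolding B_def Psuc by blast
      then show "x \<in> B" unfolding B_def by blast
    qed
    show "B \<subseteq> phi -` B \<inter> space M"
    proof
      fix x assume "x \<in> B"
      then obtain m where "x \<in> P m" unfolding B_def by auto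
      then have "x \<in> P (Suc m)" using inc by (auto simp: incseq_Suc_iff)
      then show "x \<in> phi -` B \<inter> space M" unfolding B_def by (auto simp: Psuc)
    qed
  qed
  have AB: "A \<subseteq> B"
  proof
    fix a assume "a \<in> A"
    then have "a \<in> U" unfolding U_def by (auto intro: exI[of _ 0] image_eqI[of a _ a])
    then show "a \<in> B" unfolding B_def using P0 by auto
  qed
  have Bsp: "B \<subseteq> space M" unfolding B_def P_def by auto
  have UC: "U \<subseteq> C" if C: "C \<subseteq> space M" "A \<subseteq> C" "phi -` C \<inter> space M = C" for C
  proof -
    have fw: "phi y \<in> C" if "y \<in> C" for y using that C(3) by blast
    have "(phi ^^ n) a \<in> C" if "a \<in> A" for n a
      by (induction n) (use that C(2) fw in auto)
    then show ?thesis unfolding U_def by auto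
  qed
  have BC: "B \<subseteq> C" if C: "C \<subseteq> space M" "A \<subseteq> C" "phi -` C \<inter> space M = C" for C
  proof -
    have "x \<in> C" if "x \<in> P m" for m x
      using that
    proof (induction m arbitrary: x)
      case 0 then show ?case using UC[OF C] P0 by auto
    next
      case (Suc m)
      then have "phi x \<in> C" "x \<in> space M" by (auto simp: Psuc)
      then show ?case using C(3) by blast
    qed
    then show ?thesis unfolding B_def by auto
  qed
  have eq: "min_inv_superset M phi A = B"
    unfolding min_inv_superset_def
  proof
    show "\<Inter> {C. C \<subseteq> space M \<and> A \<subseteq> C \<and> phi -` C \<inter> space M = C} \<subseteq> B"
      using Bsp AB Binv by blast
    show "B \<subseteq> \<Inter> {C. C \<subseteq> space M \<and> A \<subseteq> C \<and> phi -` C \<inter> space M = C}"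
      using BC by blast
  qed
  have UB: "U \<subseteq> B" unfolding B_def using P0 by auto
  have "emeasure M B = emeasure M U"
  proof -
    have "(SUP n. emeasure M (P n)) = emeasure M (\<Union>i. P i)"
      by (rule SUP_emeasure_incseq) (use Pm inc in auto)
    then show ?thesis unfolding B_def Pmeas by simp
  qed
  then have "emeasure M (B - U) = 0"
    using emeasure_Diff[OF _ Bm Um UB] by (simp add: emeasure_eq_measure)
  moreover have "(B - U) \<union> (U - B) = B - U" using UB by auto
  ultimately show ?thesis
    using eq Bm Binv unfolding inv_sets_def U_def[symmetric] P_def[symmetric] B_def[symmetric]
    by (auto simp: P_def B_def)
qed

end
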